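(* Let $N\ge 2$, $K\ge 2$ be integers, $d_m=N-1$ for $m\in[1:N]$ and $d_m=N$ for $m\in[N+1:N^K]$, $C=\left(\sum_{k=0}^{K-1}N^{-k}\right)^{-1}$, and $1\le D\le 1/C$. Let $\mathcal{F}_D$ be the set of probability vectors $P$ on $[1:N^K]$ with $\frac{1}{N-1}\sum_{m=1}^{N^K}p_md_m=D$, and $U$ the uniform distribution on $[1:N^K]$. Then the minimum $\rho_\alpha:=\min_{P\in\mathcal{F}_D}D_\alpha(P\|U)$ equals, for $0<\alpha<\infty$, $\alpha\ne1$, $$\rho_\alpha=\frac{1}{\alpha-1}\log\left[N\left(\frac{1-(N-1)(D-1)}{N}\right)^{\alpha}+(N^K-N)\left(\frac{(N-1)(D-1)}{N^K-N}\right)^{\alpha}\right]+\log N^K;$$ for $\alpha=1$, $$\rho_1=\{1-(N-1)(D-1)\}\log\frac{1-(N-1)(D-1)}{N}+(N-1)(D-1)\log\frac{(N-1)(D-1)}{N^K-N}+\log N^K;$$ and for $\alpha=\infty$, $$\rho_\infty=\log\frac{1-(N-1)(D-1)}{N}+\log N^K.$$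
   Context: Notation: $[i:j]=\{i,\dots,j\}$; logarithms are natural, with $0\log0=0$. Rényi divergence for probability vectors $P,U$ on $[1:M]$ with $u_m>0$: $D_\alpha(P\|U)=\frac{1}{\alpha-1}\log\sum_m p_m^\alpha u_m^{1-\alpha}$ for $0<\alpha<\infty,\alpha\ne1$; $D_1(P\|U)=\sum_m p_m\log\frac{p_m}{u_m}$; $D_\infty(P\|U)=\log\max_m\frac{p_m}{u_m}$. (Interpretation: optimal tradeoff between information leakage and normalized expected download cost $D$ for the symmetric Tian–Sun–Chen PIR scheme with $N$ databases, $K$ messages, message length $N-1$.) *)

theory Defs
  imports Complex_Main
begin

(* Probability vectors on [1:M], represented as functions nat => real
   (values outside {1..M} are irrelevant). *)
definition prob_vec :: "nat \<Rightarrow> (nat \<Rightarrow> real) \<Rightarrow> bool" where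
  "prob_vec M P \<longleftrightarrow> (\<forall>m\<in>{1..M}. 0 \<le> P m) \<and> (\<Sum>m=1..M. P m) = 1"

definition renyi_div :: "real \<Rightarrow> nat \<Rightarrow> (nat \<Rightarrow> real) \<Rightarrow> (nat \<Rightarrow> real) \<Rightarrow> real" where
  "renyi_div \<alpha> M P U =
     1 / (\<alpha> - 1) * ln (\<Sum>m=1..M. P m powr \<alpha> * U m powr (1 - \<alpha>))"

(* order 1 (KL divergence); note 0 * ln 0 = 0 in Isabelle, matching 0 log 0 = 0 *)
definition renyi_div_1 :: "nat \<Rightarrow> (nat \<Rightarrow> real) \<Rightarrow> (nat \<Rightarrow> real) \<Rightarrow> real" where
  "renyi_div_1 M P U = (\<Sum>m=1..M. P m * ln (P m / U m))"

definition renyi_div_inf :: "nat \<Rightarrow> (nat \<Rightarrow> real) \<Rightarrow> (nat \<Rightarrow> real) \<Rightarrow> real" where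
  "renyi_div_inf M P U = ln (Max ((\<lambda>m. P m / U m) ` {1..M}))"

definition dcost :: "nat \<Rightarrow> nat \<Rightarrow> real" where
  "dcost N m = (if m \<le> N then real N - 1 else real N)"

definition feasible :: "nat \<Rightarrow> nat \<Rightarrow> real \<Rightarrow> (nat \<Rightarrow> real) set" where
  "feasible N K D = {P. prob_vec (N ^ K) P \<and>
      1 / (real N - 1) * (\<Sum>m=1..N^K. P m * dcost N m) = D}"

definition uniform :: "nat \<Rightarrow> nat \<Rightarrow> real" where
  "uniform M m = 1 / real M"

definition is_minimum :: "real set \<Rightarrow> real \<Rightarrow> bool" where
  "is_minimum S x \<longleftrightarrow> x \<in> S \<and> (\<forall>y\<in>S. x \<le> y)"

end

theory Submission
  imports Defs "HOL-Analysis.Convex"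
begin

lemma pow_tangent_ge:
  fixes x c \<alpha> :: real
  assumes "\<alpha> > 1" "x \<ge> 0" "c > 0"
  shows "\<alpha> * x * c powr (\<alpha> - 1) - (\<alpha> - 1) * c powr \<alpha> \<le> x powr \<alpha>"
proof -
  have q: "\<alpha> / (\<alpha> - 1) > 1" using assms by simp
  have e: "1 / \<alpha> + 1 / (\<alpha> / (\<alpha> - 1)) = 1" using assms by (simp add: field_simps)
  have "x * c powr (\<alpha> - 1) \<le> x powr \<alpha> / \<alpha> + (c powr (\<alpha> - 1)) powr (\<alpha> / (\<alpha> - 1)) / (\<alpha> / (\<alpha> - 1))"
    using Youngs_inequality[OF assms(1) q e assms(2)] assms by simp
  also have "(c powr (\<alpha> - 1)) powr (\<alpha> / (\<alpha> - 1)) = c powr \<alpha>"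
    using assms by (simp add: powr_powr)
  finally have "x * c powr (\<alpha> - 1) \<le> x powr \<alpha> / \<alpha> + c powr \<alpha> * (\<alpha> - 1) / \<alpha>"
    by simp
  then have "\<alpha> * (x * c powr (\<alpha> - 1)) \<le> \<alpha> * (x powr \<alpha> / \<alpha> + c powr \<alpha> * (\<alpha> - 1) / \<alpha>)"
    using assms by (intro mult_left_mono) auto
  moreover have "\<alpha> * (x powr \<alpha> / \<alpha> + c powr \<alpha> * (\<alpha> - 1) / \<alpha>) = x powr \<alpha> + c powr \<alpha> * (\<alpha> - 1)"
    using assms by (simp add: field_simps)
  ultimately show ?thesis by (simp add: algebra_simps)
qed

lemma pow_tangent_le:
  fixes x c \<alpha> :: real
  assumes "0 < \<alpha>" "\<alpha> < 1" "x \<ge> 0" "c > 0"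
  shows "x powr \<alpha> \<le> c powr (\<alpha> - 1) * (\<alpha> * x + (1 - \<alpha>) * c)"
proof (cases "x = 0")
  case True
  then show ?thesis using assms by simp
next
  case False
  then have xp: "x > 0" using assms by simp
  have "x powr \<alpha> * c powr (1 - \<alpha>) \<le> \<alpha> * x + (1 - \<alpha>) * c"
    using Youngs_inequality_0[of \<alpha> "1 - \<alpha>" x c] assms xp by simp
  then have "c powr (\<alpha> - 1) * (x powr \<alpha> * c powr (1 - \<alpha>)) \<le> c powr (\<alpha> - 1) * (\<alpha> * x + (1 - \<alpha>) * c)"
    by (intro mult_left_mono) auto
  moreover have "c powr (\<alpha> - 1) * (x powr \<alpha> * c powr (1 - \<alpha>)) = x powr \<alpha>"
  proof -
    have "c powr (\<alpha> - 1) * c powr (1 - \<alpha>) = 1" using assms by (simp add: powr_add[symmetric])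
    then show ?thesis by (metis mult.commute mult.left_commute mult_1_right)
  qed
  ultimately show ?thesis by simp
qed

lemma xlnx_tangent:
  fixes x c :: real
  assumes "x \<ge> 0" "c > 0"
  shows "x * ln c + x - c \<le> x * ln x"
proof (cases "x = 0")
  case True then show ?thesis using assms by simp
next
  case False
  then have xp: "x > 0" using assms by simp
  have "1 - c / x \<le> ln (x / c)"
    using ln_le_minus_one[of "c / x"] xp assms by (simp add: ln_div)
  then have "x * (1 - c / x) \<le> x * ln (x / c)" using xp by (intro mult_left_mono) auto
  moreover have "x * (1 - c / x) = x - c" using xp by (simp add: field_simps)
  moreover have "x * ln (x / c) = x * ln x - x * ln c" using xp assms by (simp add: ln_div algebra_simps)
  ultimately show ?thesis by linarith
qed

lemma grp_zero:
  fixes x :: "nat \<Rightarrow> real"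
  assumes "finite G" "\<forall>i\<in>G. 0 \<le> x i" "sum x G = 0"
  shows "\<forall>i\<in>G. x i = 0"
  using assms sum_nonneg_eq_0_iff by blast

lemma grp_ge:
  fixes x :: "nat \<Rightarrow> real"
  assumes "finite G" "card G > 0" "\<forall>i\<in>G. 0 \<le> x i" "sum x G = s" "\<alpha> > 1"
  shows "real (card G) * (s / card G) powr \<alpha> \<le> (\<Sum>i\<in>G. x i powr \<alpha>)"
proof -
  let ?n = "real (card G)"
  have s0: "s \<ge> 0" using assms sum_nonneg by metis
  show ?thesis
  proof (cases "s = 0")
    case True
    then show ?thesis using assms by (simp add: sum_nonneg)
  next
    case False
    define c where "c = s / ?n"
    have cp: "c > 0" using False s0 assms by (simp add: c_def)
    have "(\<Sum>i\<in>G. \<alpha> * x i * c powr (\<alpha> - 1) - (\<alpha> - 1) * c powr \<alpha>) \<le> (\<Sum>i\<in>G. x i powr \<alpha>)"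
      using pow_tangent_ge assms cp by (intro sum_mono) auto
    moreover have "(\<Sum>i\<in>G. \<alpha> * x i * c powr (\<alpha> - 1) - (\<alpha> - 1) * c powr \<alpha>)
        = \<alpha> * s * c powr (\<alpha> - 1) - ?n * (\<alpha> - 1) * c powr \<alpha>"
    proof -
      have "(\<Sum>i\<in>G. \<alpha> * x i * c powr (\<alpha> - 1)) = \<alpha> * (\<Sum>i\<in>G. x i) * c powr (\<alpha> - 1)"
        by (simp add: sum_distrib_left sum_distrib_right mult.assoc)
      then show ?thesis using assms by (simp add: sum_subtractf)
    qed
    moreover have "s * c powr (\<alpha> - 1) = ?n * c powr \<alpha>"
    proof -
      have "c powr (\<alpha> - 1) = c powr \<alpha> / c" using cp by (simp add: powr_diff)
      moreover have "s = ?n * c" using assms(2) unfolding c_def by simp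
      ultimately show ?thesis using cp by simp
    qed
    moreover have "\<alpha> * s * c powr (\<alpha> - 1) = \<alpha> * (?n * c powr \<alpha>)"
      using calculation(3) by (simp add: mult.assoc)
    moreover have "\<alpha> * (?n * c powr \<alpha>) - ?n * (\<alpha> - 1) * c powr \<alpha> = ?n * c powr \<alpha>"
      by (simp add: algebra_simps)
    ultimately have "?n * c powr \<alpha> \<le> (\<Sum>i\<in>G. x i powr \<alpha>)" by linarith
    then show ?thesis by (simp only: c_def)
  qed
qed

lemma grp_le:
  fixes x :: "nat \<Rightarrow> real"
  assumes "finite G" "card G > 0" "\<forall>i\<in>G. 0 \<le> x i" "sum x G = s" "0 < \<alpha>" "\<alpha> < 1"
  shows "(\<Sum>i\<in>G. x i powr \<alpha>) \<le> real (card G) * (s / card G) powr \<alpha>"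
proof -
  let ?n = "real (card G)"
  have s0: "s \<ge> 0" using assms sum_nonneg by metis
  show ?thesis
  proof (cases "s = 0")
    case True
    then have "\<forall>i\<in>G. x i = 0" using grp_zero assms by blast
    then show ?thesis using assms True by simp
  next
    case False
    define c where "c = s / ?n"
    have cp: "c > 0" using False s0 assms by (simp add: c_def)
    have "(\<Sum>i\<in>G. x i powr \<alpha>) \<le> (\<Sum>i\<in>G. c powr (\<alpha> - 1) * (\<alpha> * x i + (1 - \<alpha>) * c))"
      using pow_tangent_le assms cp by (intro sum_mono) auto
    moreover have "(\<Sum>i\<in>G. c powr (\<alpha> - 1) * (\<alpha> * x i + (1 - \<alpha>) * c))
        = c powr (\<alpha> - 1) * (\<alpha> * s + ?n * (1 - \<alpha>) * c)"
      using assms by (simp add: sum.distrib sum_distrib_left[symmetric])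
    moreover have "c powr (\<alpha> - 1) * (\<alpha> * s + ?n * (1 - \<alpha>) * c) = ?n * c powr \<alpha>"
    proof -
      have "c powr (\<alpha> - 1) = c powr \<alpha> / c" using cp by (simp add: powr_diff)
      moreover have "s = ?n * c" using assms(2) unfolding c_def by simp
      ultimately have "c powr (\<alpha> - 1) * (\<alpha> * s + ?n * (1 - \<alpha>) * c) = c powr \<alpha> / c * (?n * c * (\<alpha> + (1 - \<alpha>)))"
        by (simp add: algebra_simps)
      also have "\<dots> = ?n * c powr \<alpha>" using cp by simp
      finally show ?thesis .
    qed
    ultimately have "(\<Sum>i\<in>G. x i powr \<alpha>) \<le> ?n * c powr \<alpha>" by linarith
    then show ?thesis by (simp only: c_def)
  qed
qed

lemma grp_ln:
  fixes x :: "nat \<Rightarrow> real"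
  assumes "finite G" "card G > 0" "\<forall>i\<in>G. 0 \<le> x i" "sum x G = s"
  shows "s * ln (s / card G) \<le> (\<Sum>i\<in>G. x i * ln (x i))"
proof -
  let ?n = "real (card G)"
  have s0: "s \<ge> 0" using assms sum_nonneg by metis
  show ?thesis
  proof (cases "s = 0")
    case True
    then have "\<forall>i\<in>G. x i = 0" using grp_zero assms by blast
    then show ?thesis using assms True by simp
  next
    case False
    define c where "c = s / ?n"
    have cp: "c > 0" using False s0 assms by (simp add: c_def)
    have "(\<Sum>i\<in>G. x i * ln c + x i - c) \<le> (\<Sum>i\<in>G. x i * ln (x i))"
      using xlnx_tangent assms cp by (intro sum_mono) auto
    moreover have "(\<Sum>i\<in>G. x i * ln c + x i - c) = s * ln c + s - ?n * c"
      using assms by (simp add: sum.distrib sum_subtractf sum_distrib_right[symmetric])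
    moreover have "s = ?n * c" using assms(2) unfolding c_def by simp
    ultimately have "s * ln c \<le> (\<Sum>i\<in>G. x i * ln (x i))" by simp
    then show ?thesis by (simp only: c_def)
  qed
qed

lemma split_sum:
  fixes f :: "nat \<Rightarrow> real"
  assumes "N \<le> M"
  shows "(\<Sum>m=1..M. f m) = (\<Sum>m=1..N. f m) + (\<Sum>m=Suc N..M. f m)"
  using sum.ub_add_nat[of 1 N f "M-N"] assms by simp

lemma geom_aux:
  fixes x :: real
  assumes "x \<noteq> 0"
  shows "(x - 1) * (\<Sum>k<K. 1 / x ^ k) = x - x / x ^ K"
proof (induction K)
  case 0 then show ?case by simp
next
  case (Suc K)
  have "(x - 1) * (\<Sum>k<Suc K. 1 / x ^ k) = x - x / x ^ K + (x - 1) / x ^ K"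
    using Suc by (simp add: algebra_simps)
  also have "\<dots> = x - x / x ^ Suc K" using assms by (simp add: field_simps)
  finally show ?case .
qed

lemma feasible_groups:
  assumes "P \<in> feasible N K D" "N \<ge> 2" "N \<le> N ^ K"
  shows "(\<forall>m\<in>{1..N^K}. 0 \<le> P m) \<and> (\<Sum>m=1..N. P m) = 1 - (real N - 1) * (D - 1)
     \<and> (\<Sum>m=Suc N..N^K. P m) = (real N - 1) * (D - 1)"
proof -
  let ?M = "N ^ K"
  let ?n = "real N"
  have pv: "prob_vec ?M P" and c: "1 / (?n - 1) * (\<Sum>m=1..?M. P m * dcost N m) = D"
    using assms(1) unfolding feasible_def by auto
  have nn: "\<forall>m\<in>{1..?M}. 0 \<le> P m" and s1: "(\<Sum>m=1..?M. P m) = 1" using pv unfolding prob_vec_def by auto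
  define SA where "SA = (\<Sum>m=1..N. P m)"
  define SB where "SB = (\<Sum>m=Suc N..?M. P m)"
  have sab: "SA + SB = 1" using s1 split_sum[OF assms(3), of P] by (simp add: SA_def SB_def)
  have "(\<Sum>m=1..?M. P m * dcost N m) = (\<Sum>m=1..N. P m * dcost N m) + (\<Sum>m=Suc N..?M. P m * dcost N m)"
    using split_sum[OF assms(3)] by blast
  also have "(\<Sum>m=1..N. P m * dcost N m) = (\<Sum>m=1..N. P m * (?n - 1))"
    by (rule sum.cong) (auto simp: dcost_def)
  also have "(\<Sum>m=Suc N..?M. P m * dcost N m) = (\<Sum>m=Suc N..?M. P m * ?n)"
    by (rule sum.cong) (auto simp: dcost_def)
  finally have ds: "(\<Sum>m=1..?M. P m * dcost N m) = SA * (?n - 1) + SB * ?n"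
    by (simp add: SA_def SB_def sum_distrib_right)
  have n1: "?n - 1 > 0" using assms by simp
  have "SA * (?n - 1) + SB * ?n = (?n - 1) * D" using c ds n1 by (simp add: field_simps)
  then have "SA = 1 - (?n - 1) * (D - 1)" 
  proof -
    have "SA * ?n + SB * ?n = ?n" using sab by (metis distrib_right mult_1)
    then show ?thesis using \<open>SA * (?n - 1) + SB * ?n = (?n - 1) * D\<close> by (simp add: algebra_simps)
  qed
  then show ?thesis using nn sab by (simp add: SA_def SB_def)
qed

lemma prob_pos:
  assumes "prob_vec M P"
  shows "\<exists>m\<in>{1..M}. P m > 0"
proof (rule ccontr)
  assume "\<not> ?thesis"
  then have "\<forall>m\<in>{1..M}. P m = 0" using assms unfolding prob_vec_def by force
  then have "(\<Sum>m=1..M. P m) = 0" by simp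
  then show False using assms unfolding prob_vec_def by simp
qed

lemma powsum_pos:
  assumes "prob_vec M P" "\<alpha> > 0"
  shows "(\<Sum>m=1..M. P m powr \<alpha>) > 0"
proof -
  obtain m where m: "m \<in> {1..M}" "P m > 0" using prob_pos[OF assms(1)] by blast
  have "P m powr \<alpha> \<le> (\<Sum>m=1..M. P m powr \<alpha>)"
    by (rule member_le_sum) (use m in auto)
  moreover have "P m powr \<alpha> > 0" using m by simp
  ultimately show ?thesis by linarith
qed

lemma renyi_eq:
  assumes "prob_vec M P" "M > 0" "\<alpha> > 0" "\<alpha> \<noteq> 1"
  shows "renyi_div \<alpha> M P (uniform M) = 1 / (\<alpha> - 1) * ln (\<Sum>m=1..M. P m powr \<alpha>) + ln (real M)"
proof -
  let ?S = "(\<Sum>m=1..M. P m powr \<alpha>)"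
  have Sp: "?S > 0" using powsum_pos assms by blast
  have "(\<Sum>m=1..M. P m powr \<alpha> * uniform M m powr (1 - \<alpha>)) = ?S * (1 / real M) powr (1 - \<alpha>)"
    by (simp add: uniform_def sum_distrib_right)
  moreover have "ln (?S * (1 / real M) powr (1 - \<alpha>)) = ln ?S + (\<alpha> - 1) * ln (real M)"
    using Sp assms by (simp add: ln_mult ln_powr ln_div algebra_simps)
  ultimately have "renyi_div \<alpha> M P (uniform M) = 1 / (\<alpha> - 1) * (ln ?S + (\<alpha> - 1) * ln (real M))"
    unfolding renyi_div_def by simp
  also have "\<dots> = 1 / (\<alpha> - 1) * ln ?S + ln (real M)"
    using assms by (simp add: field_simps)
  finally show ?thesis .
qed

lemma kl_eq:
  assumes "prob_vec M P" "M > 0"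
  shows "renyi_div_1 M P (uniform M) = (\<Sum>m=1..M. P m * ln (P m)) + ln (real M)"
proof -
  have "(\<Sum>m=1..M. P m * ln (P m / uniform M m)) = (\<Sum>m=1..M. P m * ln (P m) + P m * ln (real M))"
  proof (rule sum.cong)
    fix m assume "m \<in> {1..M}"
    then have "P m \<ge> 0" using assms unfolding prob_vec_def by auto
    then show "P m * ln (P m / uniform M m) = P m * ln (P m) + P m * ln (real M)"
      using assms by (cases "P m = 0") (auto simp: uniform_def ln_mult algebra_simps)
  qed simp
  also have "\<dots> = (\<Sum>m=1..M. P m * ln (P m)) + ln (real M)"
    using assms unfolding prob_vec_def by (simp add: sum.distrib sum_distrib_right[symmetric])
  finally show ?thesis unfolding renyi_div_1_def .
qed

lemma inf_lower:
  assumes "prob_vec M P" "M > 0" "N \<le> M" "N > 0" "(\<Sum>m=1..N. P m) > 0"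
  shows "ln ((\<Sum>m=1..N. P m) * real M / real N) \<le> renyi_div_inf M P (uniform M)"
proof -
  define Mx where "Mx = Max ((\<lambda>m. P m / uniform M m) ` {1..M})"
  have ge: "P m * real M \<le> Mx" if "m \<in> {1..M}" for m
  proof -
    have "P m / uniform M m \<le> Mx" unfolding Mx_def by (rule Max_ge) (use that in auto)
    then show ?thesis by (simp add: uniform_def)
  qed
  have "(\<Sum>m=1..N. P m * real M) \<le> (\<Sum>m=1..N. Mx)"
    by (rule sum_mono) (use ge assms(3) in auto)
  then have "(\<Sum>m=1..N. P m) * real M \<le> real N * Mx" by (simp add: sum_distrib_right)
  then have le: "(\<Sum>m=1..N. P m) * real M / real N \<le> Mx" using assms by (simp add: field_simps)
  have "(\<Sum>m=1..N. P m) * real M / real N > 0" using assms by simp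
  then have "ln ((\<Sum>m=1..N. P m) * real M / real N) \<le> ln Mx" using le by simp
  then show ?thesis unfolding renyi_div_inf_def Mx_def .
qed

theorem theorem1:
  fixes N K :: nat and D :: real
  assumes "N \<ge> 2" and "K \<ge> 2"
    and "1 \<le> D"
    and "D \<le> 1 / (1 / (\<Sum>k<K. 1 / real N ^ k))"
  shows
    "(\<forall>\<alpha>::real. 0 < \<alpha> \<and> \<alpha> \<noteq> 1 \<longrightarrow>
        is_minimum ((\<lambda>P. renyi_div \<alpha> (N^K) P (uniform (N^K))) ` feasible N K D)
          (1 / (\<alpha> - 1) * ln (real N * ((1 - (real N - 1) * (D - 1)) / real N) powr \<alpha>
              + (real N ^ K - real N) * (((real N - 1) * (D - 1)) / (real N ^ K - real N)) powr \<alpha>)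
           + ln (real N ^ K)))
     \<and> is_minimum ((\<lambda>P. renyi_div_1 (N^K) P (uniform (N^K))) ` feasible N K D)
          ((1 - (real N - 1) * (D - 1)) * ln ((1 - (real N - 1) * (D - 1)) / real N)
           + (real N - 1) * (D - 1) * ln (((real N - 1) * (D - 1)) / (real N ^ K - real N))
           + ln (real N ^ K))
     \<and> is_minimum ((\<lambda>P. renyi_div_inf (N^K) P (uniform (N^K))) ` feasible N K D)
          (ln ((1 - (real N - 1) * (D - 1)) / real N) + ln (real N ^ K))"
proof -
  define M where "M = N ^ K"
  define a where "a = 1 - (real N - 1) * (D - 1)"
  define b where "b = (real N - 1) * (D - 1)"
  let ?n = "real N"
  have rM: "real M = real N ^ K" by (simp add: M_def)
  have NM: "N < M"
  proof -
    have "N ^ 2 \<le> N ^ K" using assms by (intro power_increasing) auto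
    moreover have "N < N ^ 2" using assms by (simp add: power2_eq_square)
    ultimately show ?thesis by (simp add: M_def)
  qed
  have NMle: "N \<le> N ^ K" using NM by (simp add: M_def)
  have M0: "M > 0" using NM by simp
  have n0: "?n > 0" using assms by simp
  have Mn: "real M - ?n > 0" using NM by simp
  have b0: "b \<ge> 0" using assms by (simp add: b_def)
  have ab: "a + b = 1" by (simp add: a_def b_def)
  have a1: "1 - b = a" by (simp add: a_def b_def)
  define S where "S = (\<Sum>k<K. 1 / real N ^ k)"
  have DS: "D \<le> S" using assms(4) by (simp add: S_def)
  have geo: "(?n - 1) * S = ?n - ?n / ?n ^ K" unfolding S_def using geom_aux n0 by simp
  have aNM: "a \<ge> ?n / real M"
  proof -
    have "(?n - 1) * (D - 1) \<le> (?n - 1) * (S - 1)" using DS assms by (intro mult_left_mono) auto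
    then show ?thesis using geo rM by (simp add: a_def algebra_simps)
  qed
  have ap: "a > 0" using aNM n0 M0
    by (smt (verit) divide_pos_pos of_nat_0_less_iff)
  define Ps where "Ps = (\<lambda>m::nat. if m \<le> N then a / ?n else b / (real M - ?n))"
  have cB: "real (card {Suc N..M}) = real M - ?n" using NM by simp
  have Pssum: "(\<Sum>m=1..M. g (Ps m)) = ?n * g (a / ?n) + (real M - ?n) * g (b / (real M - ?n))"
    for g :: "real \<Rightarrow> real"
  proof -
    have "(\<Sum>m=1..M. g (Ps m)) = (\<Sum>m=1..N. g (Ps m)) + (\<Sum>m=Suc N..M. g (Ps m))"
      using split_sum NM by simp
    also have "(\<Sum>m=1..N. g (Ps m)) = (\<Sum>m=1..N. g (a / ?n))"
      by (rule sum.cong) (auto simp: Ps_def)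
    also have "(\<Sum>m=Suc N..M. g (Ps m)) = (\<Sum>m=Suc N..M. g (b / (real M - ?n)))"
      by (rule sum.cong) (auto simp: Ps_def)
    finally show ?thesis using cB by simp
  qed
  have Psnn: "\<forall>m. 0 \<le> Ps m" using ap b0 n0 Mn by (simp add: Ps_def)
  have Pspv: "prob_vec M Ps"
  proof -
    have "(\<Sum>m=1..M. Ps m) = a + b" using Pssum[of "\<lambda>x. x"] n0 Mn by simp
    then show ?thesis using Psnn ab unfolding prob_vec_def by simp
  qed
  have Psf: "Ps \<in> feasible N K D"
  proof -
    have "(\<Sum>m=1..M. Ps m * dcost N m) = (\<Sum>m=1..N. Ps m * dcost N m) + (\<Sum>m=Suc N..M. Ps m * dcost N m)"
      using split_sum NM by simp
    also have "(\<Sum>m=1..N. Ps m * dcost N m) = (\<Sum>m=1..N. a / ?n * (?n - 1))"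
      by (rule sum.cong) (auto simp: Ps_def dcost_def)
    also have "(\<Sum>m=Suc N..M. Ps m * dcost N m) = (\<Sum>m=Suc N..M. b / (real M - ?n) * ?n)"
      by (rule sum.cong) (auto simp: Ps_def dcost_def)
    finally have "(\<Sum>m=1..M. Ps m * dcost N m) = a * (?n - 1) + b * ?n"
      using cB n0 Mn by simp
    also have "\<dots> = (?n - 1) * D" unfolding a_def b_def by (simp add: algebra_simps)
    finally have "1 / (?n - 1) * (\<Sum>m=1..M. Ps m * dcost N m) = D" using assms by simp
    then show ?thesis using Pspv unfolding feasible_def M_def by simp
  qed
  have grp: "(\<forall>m\<in>{1..M}. 0 \<le> P m) \<and> (\<Sum>m=1..N. P m) = a \<and> (\<Sum>m=Suc N..M. P m) = b \<and> prob_vec M P"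
    if "P \<in> feasible N K D" for P
    using feasible_groups[OF that assms(1) NMle] that
    unfolding a_def b_def M_def feasible_def by simp
  have cA: "card {1..N} > 0" "card {Suc N..M} > 0" using n0 NM by auto
  have part1: "is_minimum ((\<lambda>P. renyi_div \<alpha> M P (uniform M)) ` feasible N K D)
          (1 / (\<alpha> - 1) * ln (?n * (a / ?n) powr \<alpha> + (real M - ?n) * (b / (real M - ?n)) powr \<alpha>) + ln (real M))"
    if al: "0 < \<alpha>" "\<alpha> \<noteq> 1" for \<alpha>
  proof -
    let ?Sx = "?n * (a / ?n) powr \<alpha> + (real M - ?n) * (b / (real M - ?n)) powr \<alpha>"
    let ?T = "1 / (\<alpha> - 1) * ln ?Sx + ln (real M)"
    have Sxpos: "?Sx > 0"
    proof -
      have "?n * (a / ?n) powr \<alpha> > 0" using ap n0 by simp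
      moreover have "(real M - ?n) * (b / (real M - ?n)) powr \<alpha> \<ge> 0" using Mn by simp
      ultimately show ?thesis by linarith
    qed
    have val: "renyi_div \<alpha> M Ps (uniform M) = ?T"
      using renyi_eq[OF Pspv M0 al] Pssum[of "\<lambda>x. x powr \<alpha>"] by simp
    have lower: "?T \<le> renyi_div \<alpha> M P (uniform M)" if P: "P \<in> feasible N K D" for P
    proof -
      have g: "\<forall>m\<in>{1..M}. 0 \<le> P m" "(\<Sum>m=1..N. P m) = a" "(\<Sum>m=Suc N..M. P m) = b" "prob_vec M P"
        using grp[OF P] by auto
      have gA: "\<forall>m\<in>{1..N}. 0 \<le> P m" "\<forall>m\<in>{Suc N..M}. 0 \<le> P m" using g(1) NM by auto
      let ?SP = "(\<Sum>m=1..M. P m powr \<alpha>)"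
      have SPs: "?SP = (\<Sum>m=1..N. P m powr \<alpha>) + (\<Sum>m=Suc N..M. P m powr \<alpha>)"
        using split_sum NM by simp
      have SPpos: "?SP > 0" using powsum_pos[OF g(4) al(1)] .
      have req: "renyi_div \<alpha> M P (uniform M) = 1 / (\<alpha> - 1) * ln ?SP + ln (real M)"
        using renyi_eq[OF g(4) M0 al] .
      show ?thesis
      proof (cases "\<alpha> > 1")
        case True
        have "?n * (a / ?n) powr \<alpha> \<le> (\<Sum>m=1..N. P m powr \<alpha>)"
          using grp_ge[of "{1..N}" P a \<alpha>] cA gA g True by simp
        moreover have "(real M - ?n) * (b / (real M - ?n)) powr \<alpha> \<le> (\<Sum>m=Suc N..M. P m powr \<alpha>)"
          using grp_ge[of "{Suc N..M}" P b \<alpha>] cA gA g True cB by simp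
        ultimately have "?Sx \<le> ?SP" using SPs by linarith
        then have "ln ?Sx \<le> ln ?SP" using Sxpos by simp
        then have "1 / (\<alpha> - 1) * ln ?Sx \<le> 1 / (\<alpha> - 1) * ln ?SP"
          using True by (intro mult_left_mono) auto
        then show ?thesis using req by simp
      next
        case False
        then have a1: "\<alpha> < 1" using al by simp
        have "(\<Sum>m=1..N. P m powr \<alpha>) \<le> ?n * (a / ?n) powr \<alpha>"
          using grp_le[of "{1..N}" P a \<alpha>] cA gA g a1 al by simp
        moreover have "(\<Sum>m=Suc N..M. P m powr \<alpha>) \<le> (real M - ?n) * (b / (real M - ?n)) powr \<alpha>"
          using grp_le[of "{Suc N..M}" P b \<alpha>] cA gA g a1 al cB by simp
        ultimately have "?SP \<le> ?Sx" using SPs by linarith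
        then have "ln ?SP \<le> ln ?Sx" using SPpos by simp
        then have "1 / (\<alpha> - 1) * ln ?Sx \<le> 1 / (\<alpha> - 1) * ln ?SP"
          using a1 by (intro mult_left_mono_neg) auto
        then show ?thesis using req by simp
      qed
    qed
    show ?thesis unfolding is_minimum_def
      using val lower Psf by (auto intro!: rev_image_eqI[of Ps])
  qed
  have part2: "is_minimum ((\<lambda>P. renyi_div_1 M P (uniform M)) ` feasible N K D)
          (a * ln (a / ?n) + b * ln (b / (real M - ?n)) + ln (real M))"
  proof -
    let ?T = "a * ln (a / ?n) + b * ln (b / (real M - ?n)) + ln (real M)"
    have e1: "?n * (a / ?n * ln (a / ?n)) = a * ln (a / ?n)" using n0 by simp
    have e2: "(real M - ?n) * (b / (real M - ?n) * ln (b / (real M - ?n))) = b * ln (b / (real M - ?n))"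
      using Mn by simp
    have val: "renyi_div_1 M Ps (uniform M) = ?T"
      using kl_eq[OF Pspv M0] Pssum[of "\<lambda>x. x * ln x"] e1 e2 by simp
    have lower: "?T \<le> renyi_div_1 M P (uniform M)" if P: "P \<in> feasible N K D" for P
    proof -
      have g: "\<forall>m\<in>{1..M}. 0 \<le> P m" "(\<Sum>m=1..N. P m) = a" "(\<Sum>m=Suc N..M. P m) = b" "prob_vec M P"
        using grp[OF P] by auto
      have gA: "\<forall>m\<in>{1..N}. 0 \<le> P m" "\<forall>m\<in>{Suc N..M}. 0 \<le> P m" using g(1) NM by auto
      have SPs: "(\<Sum>m=1..M. P m * ln (P m)) = (\<Sum>m=1..N. P m * ln (P m)) + (\<Sum>m=Suc N..M. P m * ln (P m))"
        using split_sum NM by simp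
      have "a * ln (a / ?n) \<le> (\<Sum>m=1..N. P m * ln (P m))"
        using grp_ln[of "{1..N}" P a] cA gA g by simp
      moreover have "b * ln (b / (real M - ?n)) \<le> (\<Sum>m=Suc N..M. P m * ln (P m))"
        using grp_ln[of "{Suc N..M}" P b] cA gA g cB by simp
      ultimately show ?thesis using SPs kl_eq[OF g(4) M0] by linarith
    qed
    show ?thesis unfolding is_minimum_def
      using val lower Psf by (auto intro!: rev_image_eqI[of Ps])
  qed
  have part3: "is_minimum ((\<lambda>P. renyi_div_inf M P (uniform M)) ` feasible N K D)
          (ln (a / ?n) + ln (real M))"
  proof -
    have lnT: "ln (a * real M / ?n) = ln (a / ?n) + ln (real M)"
    proof -
      have "a * real M / ?n = (a / ?n) * real M" by simp
      then show ?thesis using ap n0 M0 by (simp only: ln_mult) (simp add: ln_mult)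
    qed
    have val: "renyi_div_inf M Ps (uniform M) = ln (a / ?n) + ln (real M)"
    proof -
      have "Max ((\<lambda>m. Ps m / uniform M m) ` {1..M}) = a * real M / ?n"
      proof (rule Max_eqI)
        show "finite ((\<lambda>m. Ps m / uniform M m) ` {1..M})" by simp
        show "a * real M / ?n \<in> (\<lambda>m. Ps m / uniform M m) ` {1..M}"
          using NM n0 by (intro rev_image_eqI[of 1]) (auto simp: Ps_def uniform_def)
        fix y assume "y \<in> (\<lambda>m. Ps m / uniform M m) ` {1..M}"
        then obtain m where y: "y = Ps m * real M" by (auto simp: uniform_def)
        have "b / (real M - ?n) \<le> a / ?n"
        proof -
          have "?n \<le> a * real M" using aNM M0 by (simp add: field_simps)
          moreover have "a * ?n + b * ?n = ?n" using ab by (metis distrib_right mult_1)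
          ultimately have "b * ?n \<le> a * (real M - ?n)" by (simp add: algebra_simps)
          then show ?thesis using n0 Mn by (simp add: field_simps)
        qed
        then have "Ps m \<le> a / ?n" by (simp add: Ps_def)
        then have "Ps m * real M \<le> a / ?n * real M" by (intro mult_right_mono) auto
        then show "y \<le> a * real M / ?n" using y by simp
      qed
      then show ?thesis unfolding renyi_div_inf_def using lnT by simp
    qed
    have lower: "ln (a / ?n) + ln (real M) \<le> renyi_div_inf M P (uniform M)" if P: "P \<in> feasible N K D" for P
    proof -
      have g: "(\<Sum>m=1..N. P m) = a" "prob_vec M P" using grp[OF P] by auto
      have "ln (a * real M / ?n) \<le> renyi_div_inf M P (uniform M)"
        using inf_lower[OF g(2) M0, of N] NM n0 ap g by simp
      then show ?thesis using lnT by simp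
    qed
    show ?thesis unfolding is_minimum_def
      using val lower Psf by (auto intro!: rev_image_eqI[of Ps])
  qed
  show ?thesis
    unfolding a_def[symmetric] b_def[symmetric] rM[symmetric] M_def[symmetric] a1
    using part1 part2 part3 by blast
qed

end
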